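(* Let $G$ be a graph with $V(G)=[n]$ and without isolated vertices, and let $I=[n]\setminus[n-i]$ be a maximal independent set of $G$ with $\gamma(G;I)=i\gamma(G)$. Write $\overline{S}=[n]\setminus S$ and order the facets of $\mathcal{NC}(G)$ by $\prec$. For $\sigma\in\mathcal{NC}(G)$ let $\beta(\sigma)=|N(\overline{\sigma}\cap\overline{I})\cap\overline{\sigma}\cap I|$. Then for every $\sigma\in\mathcal{NC}(G)$ with $\beta(\sigma)\ge1$ we have $|M_\prec(\sigma)|\le n-i\gamma(G)-\beta(\sigma)$, and for every $\sigma\in\mathcal{NC}(G)$ we have $|M_\prec(\sigma)|\le n-i\gamma(G)-1$.
   Context: $\mathcal{NC}(G)$ is the simplicial complex on $V(G)$ whose faces are the sets $W\subseteq V(G)$ such that $V(G)\setminus W$ contains both endpoints of some edge; its facets are the sets $[n]\setminus\{a,b\}$ for edges $ab$. $\gamma(G;A)$ is the minimum size of a set $D$ such that every vertex of $A$ has a neighbor in $D$; $i\gamma(G)=\max\{\gamma(G;I): I\text{ independent}\}$. $N(S)=\{v: uv\in E(G)\text{ for some }u\in S\}$. For edges $a_1b_1,a_2b_2$ with $a_j<b_j$, $a_1b_1<_L a_2b_2$ if $b_1<b_2$, or $b_1=b_2$ and $a_1<a_2$; for distinct facets, $\sigma\prec\tau$ iff $\overline{\sigma}<_L\overline{\tau}$, giving a linear order $\sigma_1,\dots,\sigma_m$ of facets. For a face $\sigma$, let $i$ be least with $\sigma\subseteq\sigma_i$; if $i=1$, $\mathrm{mes}_\prec(\sigma)$ is empty;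 otherwise $\mathrm{mes}_\prec(\sigma)=(v_1,\dots,v_{i-1})$ with $v_1=\min(\sigma\setminus\sigma_1)$ and, for $2\le k\le i-1$, $v_k=\min(\{v_1,\dots,v_{k-1}\}\cap(\sigma\setminus\sigma_k))$ if nonempty, else $v_k=\min(\sigma\setminus\sigma_k)$. $M_\prec(\sigma)$ is the set of vertices appearing in $\mathrm{mes}_\prec(\sigma)$. *)

theory Defs
  imports Main
begin

definition simple_graph :: "nat \<Rightarrow> nat set set \<Rightarrow> bool" where
  "simple_graph n E \<longleftrightarrow> (\<forall>e\<in>E. card e = 2 \<and> e \<subseteq> {1..n})"

definition no_isolated :: "nat \<Rightarrow> nat set set \<Rightarrow> bool" where
  "no_isolated n E \<longleftrightarrow> (\<forall>v\<in>{1..n}. \<exists>e\<in>E. v \<in> e)"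

definition nbhd :: "nat set set \<Rightarrow> nat set \<Rightarrow> nat set" where
  "nbhd E S = {v. \<exists>u\<in>S. {u, v} \<in> E}"

definition indep :: "nat \<Rightarrow> nat set set \<Rightarrow> nat set \<Rightarrow> bool" where
  "indep n E I \<longleftrightarrow> I \<subseteq> {1..n} \<and> (\<forall>e\<in>E. \<not> e \<subseteq> I)"

definition maximal_indep :: "nat \<Rightarrow> nat set set \<Rightarrow> nat set \<Rightarrow> bool" where
  "maximal_indep n E I \<longleftrightarrow> indep n E I \<and> (\<forall>J. indep n E J \<and> I \<subseteq> J \<longrightarrow> J = I)"

definition gammaA :: "nat \<Rightarrow> nat set set \<Rightarrow> nat set \<Rightarrow> nat" where
  "gammaA n E A = Min {card D | D. D \<subseteq> {1..n} \<and> (\<forall>a\<in>A. \<exists>d\<in>D. {a, d} \<in> E)}"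

definition igamma :: "nat \<Rightarrow> nat set set \<Rightarrow> nat" where
  "igamma n E = Max {gammaA n E I | I. indep n E I}"

definition NC :: "nat \<Rightarrow> nat set set \<Rightarrow> nat set set" where
  "NC n E = {W. W \<subseteq> {1..n} \<and> (\<exists>e\<in>E. e \<subseteq> {1..n} - W)}"

definition edge_lt :: "nat set \<Rightarrow> nat set \<Rightarrow> bool" where
  "edge_lt e f \<longleftrightarrow> Max e < Max f \<or> (Max e = Max f \<and> Min e < Min f)"

definition edge_rank :: "nat set set \<Rightarrow> nat set \<Rightarrow> nat" where
  "edge_rank E e = card {f \<in> E. edge_lt f e} + 1"

text \<open>The j-th facet (1-based) sigma_j = [n] minus the j-th edge in the order <_L.\<close>
definition facet :: "nat \<Rightarrow> nat set set \<Rightarrow> nat \<Rightarrow> nat set" where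
  "facet n E j = {1..n} - (THE e. e \<in> E \<and> edge_rank E e = j)"

definition first_idx :: "nat \<Rightarrow> nat set set \<Rightarrow> nat set \<Rightarrow> nat" where
  "first_idx n E \<sigma> = (LEAST j. 1 \<le> j \<and> j \<le> card E \<and> \<sigma> \<subseteq> facet n E j)"

primrec mes_seq :: "(nat \<Rightarrow> nat set) \<Rightarrow> nat set \<Rightarrow> nat \<Rightarrow> nat list" where
  "mes_seq F \<sigma> 0 = []"
| "mes_seq F \<sigma> (Suc k) =
     (let prev = mes_seq F \<sigma> k;
          D = \<sigma> - F (Suc k);
          C = set prev \<inter> D
      in prev @ [if C \<noteq> {} then Min C else Min D])"

definition mes :: "nat \<Rightarrow> nat set set \<Rightarrow> nat set \<Rightarrow> nat list" where
  "mes n E \<sigma> = mes_seq (facet n E) \<sigma> (first_idx n E \<sigma> - 1)"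

definition Mset :: "nat \<Rightarrow> nat set set \<Rightarrow> nat set \<Rightarrow> nat set" where
  "Mset n E \<sigma> = set (mes n E \<sigma>)"

definition beta :: "nat \<Rightarrow> nat set set \<Rightarrow> nat set \<Rightarrow> nat set \<Rightarrow> nat" where
  "beta n E I \<sigma> = card (nbhd E (({1..n} - \<sigma>) \<inter> ({1..n} - I)) \<inter> ({1..n} - \<sigma>) \<inter> I)"

end

theory Submission
  imports Defs
begin

lemma fin_E: "simple_graph n E \<Longrightarrow> finite E"
  unfolding simple_graph_def
  by (rule finite_subset[of E "Pow {1..n}"]) auto

lemma edge_shape:
  assumes "simple_graph n E" "e \<in> E"
  shows "\<exists>a b. e = {a,b} \<and> a < b \<and> 1 \<le> a \<and> b \<le> n"
proof -
  from assms have c: "card e = 2" and s: "e \<subseteq> {1..n}" by (auto simp: simple_graph_def)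
  from c obtain x y where xy: "e = {x,y}" "x \<noteq> y" by (auto simp: card_2_iff)
  show ?thesis
  proof (cases "x < y")
    case True then show ?thesis using xy s by (intro exI[of _ x] exI[of _ y]) auto
  next
    case False then have "y < x" using xy by simp
    then show ?thesis using xy s by (intro exI[of _ y] exI[of _ x]) auto
  qed
qed

lemma other_end:
  assumes "simple_graph n E" "e \<in> E" "x \<in> e"
  shows "\<exists>w. e = {x,w} \<and> w \<noteq> x"
  using edge_shape[OF assms(1,2)] assms(3) by (metis insert_commute insertE less_irrefl singletonD)

lemma edge_sub: "simple_graph n E \<Longrightarrow> e \<in> E \<Longrightarrow> e \<subseteq> {1..n}"
  by (simp add: simple_graph_def)

lemma edge_lt_total:
  assumes "simple_graph n E" "e\<in>E" "f\<in>E" "e\<noteq>f"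
  shows "edge_lt e f \<or> edge_lt f e"
proof -
  obtain a b where ab: "e={a,b}" "a<b" using edge_shape[OF assms(1,2)] by auto
  obtain c d where cd: "f={c,d}" "c<d" using edge_shape[OF assms(1,3)] by auto
  have "Max e = b" "Min e = a" "Max f = d" "Min f = c" using ab cd by auto
  then show ?thesis using ab cd assms(4) unfolding edge_lt_def by auto
qed

lemma edge_lt_irrefl: "\<not> edge_lt e e" by (simp add: edge_lt_def)
lemma edge_lt_trans: "edge_lt e f \<Longrightarrow> edge_lt f g \<Longrightarrow> edge_lt e g" unfolding edge_lt_def by auto

lemma rank_mono:
  assumes "finite E" "f\<in>E" "edge_lt e f" "e\<in>E"
  shows "edge_rank E e < edge_rank E f"
proof -
  have "{g\<in>E. edge_lt g e} \<subset> {g\<in>E. edge_lt g f}" using assms edge_lt_trans edge_lt_irrefl by blast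
  then have "card {g\<in>E. edge_lt g e} < card {g\<in>E. edge_lt g f}"
    using assms(1) by (intro psubset_card_mono) auto
  then show ?thesis unfolding edge_rank_def by simp
qed

lemma rank_range:
  assumes "finite E" "e\<in>E"
  shows "1 \<le> edge_rank E e \<and> edge_rank E e \<le> card E"
proof -
  have "{g\<in>E. edge_lt g e} \<subseteq> E - {e}" using edge_lt_irrefl by auto
  then have "card {g\<in>E. edge_lt g e} \<le> card (E - {e})" using assms by (intro card_mono) auto
  also have "\<dots> = card E - 1" using assms by simp
  finally have "card {g\<in>E. edge_lt g e} \<le> card E - 1" .
  moreover have "card E > 0" using assms card_gt_0_iff by blast
  ultimately show ?thesis unfolding edge_rank_def by auto
qed

lemma rank_inj:
  assumes "simple_graph n E" shows "inj_on (edge_rank E) E"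
  using edge_lt_total[OF assms] rank_mono[OF fin_E[OF assms]] unfolding inj_on_def
  by (metis less_irrefl)

lemma rank_img:
  assumes "simple_graph n E" shows "edge_rank E ` E = {1..card E}"
proof -
  have "edge_rank E ` E \<subseteq> {1..card E}" using rank_range fin_E[OF assms] by auto
  moreover have "card (edge_rank E ` E) = card {1..card E}" using card_image[OF rank_inj[OF assms]] by simp
  ultimately show ?thesis by (intro card_subset_eq) auto
qed

definition eg :: "nat set set \<Rightarrow> nat \<Rightarrow> nat set" where
  "eg E j = (THE e. e \<in> E \<and> edge_rank E e = j)"

lemma facet_eg: "facet n E j = {1..n} - eg E j"
  unfolding facet_def eg_def by simp

lemma eg_prop:
  assumes "simple_graph n E" "1 \<le> j" "j \<le> card E"
  shows "eg E j \<in> E \<and> edge_rank E (eg E j) = j"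
proof -
  have "\<exists>!e. e \<in> E \<and> edge_rank E e = j"
  proof -
    have "j \<in> edge_rank E ` E" using rank_img[OF assms(1)] assms(2,3) by auto
    then obtain e where "e\<in>E" "edge_rank E e = j" by auto
    then show ?thesis using rank_inj[OF assms(1)] unfolding inj_on_def by blast
  qed
  then show ?thesis unfolding eg_def by (rule theI')
qed

lemma eg_rank:
  assumes "simple_graph n E" "e \<in> E"
  shows "eg E (edge_rank E e) = e"
  unfolding eg_def
  using rank_inj[OF assms(1)] assms(2) unfolding inj_on_def by (intro the_equality) auto

lemma mes_mem: "x \<in> set (mes_seq F \<sigma> k) \<Longrightarrow> \<exists>j. 1 \<le> j \<and> j \<le> k \<and> x = Min (\<sigma> - F j)"
proof (induction k)
  case 0 then show ?case by simp
next
  case (Suc k)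
  let ?p = "mes_seq F \<sigma> k"
  let ?D = "\<sigma> - F (Suc k)"
  let ?C = "set ?p \<inter> ?D"
  have eq: "set (mes_seq F \<sigma> (Suc k)) = set ?p \<union> {if ?C \<noteq> {} then Min ?C else Min ?D}"
    by (simp add: Let_def)
  have "x \<in> set ?p \<or> x = (if ?C \<noteq> {} then Min ?C else Min ?D)" using Suc.prems unfolding eq by blast
  then show ?case
  proof
    assume "x \<in> set ?p" then show ?thesis using Suc.IH le_SucI by blast
  next
    assume h: "x = (if ?C\<noteq>{} then Min ?C else Min ?D)"
    show ?thesis
    proof (cases "?C \<noteq> {}")
      case True then have "x \<in> set ?p" using h Min_in[of ?C] by auto
      then show ?thesis using Suc.IH le_SucI by blast
    next
      case False then show ?thesis using h by auto
    qed
  qed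
qed


theorem mainTheorem4:
  fixes n i :: nat and E :: "nat set set" and I :: "nat set"
  assumes "simple_graph n E"
    and "no_isolated n E"
    and "i \<le> n"
    and "I = {n - i <.. n}"
    and "maximal_indep n E I"
    and "gammaA n E I = igamma n E"
  shows "(\<forall>\<sigma>\<in>NC n E. beta n E I \<sigma> \<ge> 1 \<longrightarrow>
            int (card (Mset n E \<sigma>)) \<le> int n - int (igamma n E) - int (beta n E I \<sigma>))
       \<and> (\<forall>\<sigma>\<in>NC n E. int (card (Mset n E \<sigma>)) \<le> int n - int (igamma n E) - 1)"
proof -
  note sg = assms(1)
  have finE: "finite E" using fin_E[OF sg] .
  have indepI: "indep n E I" using assms(5) unfolding maximal_indep_def by simp
  have indI: "\<forall>e\<in>E. \<not> e \<subseteq> I" and Isub: "I \<subseteq> {1..n}"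
    using indepI unfolding indep_def by simp_all
  have nbr_out: "w \<in> {1..n} \<and> w \<notin> I \<and> w < x" if "x \<in> I" "{x,w} \<in> E" for x w
  proof -
    have "{x,w} \<subseteq> {1..n}" using edge_sub[OF sg that(2)] .
    moreover have "w \<notin> I"
    proof
      assume "w \<in> I"
      then have "{x,w} \<subseteq> I" using that(1) by simp
      then show False using indI that(2) by auto
    qed
    ultimately show ?thesis using that(1) assms(4) by auto
  qed
  have key: "\<exists>R. R \<subseteq> I \<and> R \<noteq> {} \<and> gammaA n E I + card (Mset n E \<sigma>) + card R \<le> n
              \<and> beta n E I \<sigma> \<le> card R" if \<sigma>NC: "\<sigma> \<in> NC n E" for \<sigma>
  proof -
    define M where "M = Mset n E \<sigma>"
    have \<sigma>sub: "\<sigma> \<subseteq> {1..n}" and "\<exists>e\<in>E. e \<subseteq> {1..n} - \<sigma>" using \<sigma>NC unfolding NC_def by auto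
    then obtain e0 where e0: "e0 \<in> E" "e0 \<subseteq> {1..n} - \<sigma>" by auto
    define P where "P j \<longleftrightarrow> 1 \<le> j \<and> j \<le> card E \<and> \<sigma> \<subseteq> facet n E j" for j
    define t where "t = first_idx n E \<sigma>"
    have tdef: "t = (LEAST j. P j)" unfolding t_def first_idx_def P_def by simp
    have "P (edge_rank E e0)"
      unfolding P_def facet_eg eg_rank[OF sg e0(1)] using rank_range[OF finE e0(1)] e0 \<sigma>sub by auto
    then have Pt: "P t" unfolding tdef by (rule LeastI)
    have tmin: "\<not> \<sigma> \<subseteq> facet n E j" if "1 \<le> j" "j < t" for j
    proof -
      have "\<not> P j" using that(2) unfolding tdef by (rule not_less_Least)
      then show ?thesis using that Pt unfolding P_def by auto
    qed
    define et where "et = eg E t"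
    have et: "et \<in> E" "edge_rank E et = t" using eg_prop[OF sg] Pt unfolding P_def et_def by auto
    have \<sigma>et: "\<sigma> \<inter> et = {}" using Pt unfolding P_def facet_eg et_def by auto
    have Mdef: "M = set (mes_seq (facet n E) \<sigma> (t - 1))"
      unfolding M_def Mset_def mes_def t_def ..
    have Mprop: "\<exists>j. 1 \<le> j \<and> j < t \<and> x \<in> \<sigma> \<and> x \<in> eg E j \<and> eg E j \<in> E
                  \<and> (\<forall>z \<in> \<sigma> \<inter> eg E j. x \<le> z) \<and> x \<le> Max et" if xM: "x \<in> M" for x
    proof -
      obtain j where j: "1 \<le> j" "j \<le> t - 1" "x = Min (\<sigma> - facet n E j)"
        using mes_mem[of x "facet n E" \<sigma> "t - 1"] xM Mdef by blast
      have jt: "j < t" using j by auto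
      have jE: "j \<le> card E" using jt Pt unfolding P_def by auto
      have egj: "eg E j \<in> E" "edge_rank E (eg E j) = j" using eg_prop[OF sg j(1) jE] by auto
      have fin_egj: "finite (eg E j)" using sg egj(1) unfolding simple_graph_def
        by (metis card.infinite zero_neq_numeral)
      have eqs: "\<sigma> - facet n E j = \<sigma> \<inter> eg E j" using \<sigma>sub unfolding facet_eg by auto
      have ne: "\<sigma> \<inter> eg E j \<noteq> {}" using tmin[OF j(1) jt] eqs by auto
      have xin: "x \<in> \<sigma> \<inter> eg E j" using j(3) eqs Min_in[OF _ ne] fin_egj by auto
      have xmin: "\<forall>z \<in> \<sigma> \<inter> eg E j. x \<le> z" using j(3) eqs fin_egj by auto
      have "eg E j \<noteq> et" using egj(2) et(2) jt by auto
      then have "edge_lt (eg E j) et \<or> edge_lt et (eg E j)" using edge_lt_total[OF sg egj(1) et(1)] by auto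
      moreover have "\<not> edge_lt et (eg E j)" using rank_mono[OF finE egj(1) _ et(1)] egj(2) et(2) jt by auto
      ultimately have "edge_lt (eg E j) et" by auto
      then have "Max (eg E j) \<le> Max et" unfolding edge_lt_def by auto
      moreover have "x \<le> Max (eg E j)" using xin fin_egj by auto
      ultimately show ?thesis using j(1) jt xin xmin egj(1) by auto
    qed
    have Msub: "M \<subseteq> \<sigma>" using Mprop by blast
    have finM: "finite M" unfolding Mdef by simp
    have lemA: "\<exists>w. {x,w} \<in> E \<and> w \<notin> M" if xI: "x \<in> I" and xM: "x \<in> M" for x
    proof -
      obtain j where j: "x \<in> \<sigma>" "x \<in> eg E j" "eg E j \<in> E" "\<forall>z \<in> \<sigma> \<inter> eg E j. x \<le> z"
        using Mprop[OF xM] by auto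
      obtain w where w: "eg E j = {x,w}" "w \<noteq> x" using other_end[OF sg j(3) j(2)] by auto
      have "w < x" using nbr_out[OF xI] w j(3) by auto
      have "w \<notin> \<sigma>"
      proof
        assume "w \<in> \<sigma>"
        then have "w \<in> \<sigma> \<inter> eg E j" using w(1) by simp
        then have "x \<le> w" using j(4) by blast
        then show False using \<open>w < x\<close> by simp
      qed
      then show ?thesis using Msub w j(3) by auto
    qed
    define R where "R = {x \<in> I - M. \<exists>w. {x,w} \<in> E \<and> w \<notin> M}"
    define f where "f x = (SOME w. {x,w} \<in> E)" for x
    have fE: "{x, f x} \<in> E" if xI: "x \<in> I" for x
    proof -
      obtain e where "e \<in> E" "x \<in> e" using assms(2) Isub xI unfolding no_isolated_def by blast
      then obtain w where "{x,w} \<in> E" using other_end[OF sg] by metis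
      then show ?thesis unfolding f_def by (rule someI)
    qed
    define D where "D = ({1..n} - (I \<union> M)) \<union> f ` ((I - M) - R)"
    have fsub: "f x \<in> {1..n}" if "x \<in> I" for x
      using nbr_out[OF that fE[OF that]] by blast
    have Dsub: "D \<subseteq> {1..n}" unfolding D_def using fsub by blast
    have Ddom: "\<forall>a\<in>I. \<exists>d\<in>D. {a, d} \<in> E"
    proof
      fix a assume aI: "a \<in> I"
      show "\<exists>d\<in>D. {a, d} \<in> E"
      proof (cases "a \<in> M \<or> a \<in> R")
        case True
        then obtain w where w: "{a,w} \<in> E" "w \<notin> M" using lemA[OF aI] unfolding R_def by auto
        then have "w \<in> D" using nbr_out[OF aI w(1)] unfolding D_def by auto
        then show ?thesis using w by auto
      next
        case False
        then have "f a \<in> D" using aI unfolding D_def by auto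
        then show ?thesis using fE[OF aI] by auto
      qed
    qed
    have finS: "finite {card D |D. D \<subseteq> {1..n} \<and> (\<forall>a\<in>I. \<exists>d\<in>D. {a, d} \<in> E)}"
    proof (rule finite_subset[of _ "{0..n}"])
      show "{card D |D. D \<subseteq> {1..n} \<and> (\<forall>a\<in>I. \<exists>d\<in>D. {a, d} \<in> E)} \<subseteq> {0..n}"
      proof
        fix k assume "k \<in> {card D |D. D \<subseteq> {1..n} \<and> (\<forall>a\<in>I. \<exists>d\<in>D. {a, d} \<in> E)}"
        then obtain D' where "k = card D'" "D' \<subseteq> {1..n}" by blast
        then show "k \<in> {0..n}" using card_mono[of "{1..n}" D'] by simp
      qed
    qed simp
    have g: "gammaA n E I \<le> card D"
      unfolding gammaA_def using Dsub Ddom by (intro Min_le[OF finS]) auto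
    have finI: "finite I" using Isub finite_subset by blast
    have RIM: "R \<subseteq> I - M" unfolding R_def by auto
    have finR: "finite R" using RIM finI finite_subset by blast
    have c1: "card D \<le> card ({1..n} - (I \<union> M)) + card ((I - M) - R)"
      unfolding D_def by (rule order_trans[OF card_Un_le]) (simp add: card_image_le finI)
    have IMsub: "I \<union> M \<subseteq> {1..n}" using Isub Msub \<sigma>sub by auto
    have c2: "card ({1..n} - (I \<union> M)) = n - card (I \<union> M)"
      using card_Diff_subset[OF _ IMsub] finI finM by simp
    have c3: "card (I \<union> M) = card (I - M) + card M"
    proof -
      have "I \<union> M = (I - M) \<union> M" by auto
      then show ?thesis using card_Un_disjoint[of "I - M" M] finI finM by auto
    qed
    have c4: "card ((I - M) - R) = card (I - M) - card R"
      using card_Diff_subset[OF finR RIM] .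
    have c5: "card R \<le> card (I - M)" using card_mono[OF _ RIM] finI by auto
    have c6: "card (I \<union> M) \<le> n" using card_mono[OF _ IMsub] by simp
    have main: "gammaA n E I + card M + card R \<le> n" using g c1 c2 c3 c4 c5 c6 by linarith
    have Bsub: "nbhd E (({1..n} - \<sigma>) \<inter> ({1..n} - I)) \<inter> ({1..n} - \<sigma>) \<inter> I \<subseteq> R"
    proof
      fix x assume x: "x \<in> nbhd E (({1..n} - \<sigma>) \<inter> ({1..n} - I)) \<inter> ({1..n} - \<sigma>) \<inter> I"
      then obtain u where u: "u \<notin> \<sigma>" "{u,x} \<in> E" unfolding nbhd_def by auto
      have "{x,u} \<in> E" using u(2) by (simp add: insert_commute)
      moreover have "u \<notin> M" "x \<notin> M" using u x Msub by auto
      ultimately show "x \<in> R" using x unfolding R_def by auto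
    qed
    have beta: "beta n E I \<sigma> \<le> card R" unfolding beta_def using card_mono[OF finR Bsub] .
    obtain a b where ab: "et = {a,b}" "a < b" "1 \<le> a" "b \<le> n" using edge_shape[OF sg et(1)] by auto
    have Maxet: "Max et = b" using ab by auto
    have abM: "a \<notin> M" "b \<notin> M" using \<sigma>et ab Msub by auto
    have Rne: "R \<noteq> {}"
    proof (cases "b \<in> I")
      case True
      have "{b,a} \<in> E" using et(1) ab(1) by (simp add: insert_commute)
      then have "b \<in> R" using True abM unfolding R_def by auto
      then show ?thesis by auto
    next
      case False
      have "insert b I \<noteq> I" using False by auto
      moreover have "insert b I \<subseteq> {1..n}" using Isub ab by auto
      ultimately have "\<not> indep n E (insert b I)" using assms(5) unfolding maximal_indep_def by blast
      then obtain e where e: "e \<in> E" "e \<subseteq> insert b I" using \<open>insert b I \<subseteq> {1..n}\<close> unfolding indep_def by auto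
      have "b \<in> e"
      proof (rule ccontr)
        assume "b \<notin> e"
        then have "e \<subseteq> I" using e(2) by auto
        then show False using indI e(1) by auto
      qed
      then obtain y where y: "e = {b,y}" "y \<noteq> b" using other_end[OF sg e(1)] by auto
      have yI: "y \<in> I" using y e(2) by auto
      have "b \<le> n - i" using False ab assms(4) by auto
      then have "b < y" using yI assms(4) by auto
      have "y \<notin> M"
      proof
        assume "y \<in> M"
        then have "y \<le> Max et" using Mprop by blast
        then show False using \<open>b < y\<close> Maxet by simp
      qed
      moreover have "{y,b} \<in> E" using e(1) y(1) by (simp add: insert_commute)
      ultimately have "y \<in> R" using yI abM unfolding R_def by auto
      then show ?thesis by auto
    qed
    show ?thesis using RIM Rne main beta unfolding M_def by blast
  qed
  show ?thesis
  proof (intro conjI ballI impI)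
    fix \<sigma> assume s1: "\<sigma> \<in> NC n E" "1 \<le> beta n E I \<sigma>"
    obtain R :: "nat set" where R: "gammaA n E I + card (Mset n E \<sigma>) + card R \<le> n" "beta n E I \<sigma> \<le> card R"
      using key[OF s1(1)] by auto
    then show "int (card (Mset n E \<sigma>)) \<le> int n - int (igamma n E) - int (beta n E I \<sigma>)"
      using assms(6) by linarith
  next
    fix \<sigma> assume s2: "\<sigma> \<in> NC n E"
    obtain R :: "nat set" where R: "gammaA n E I + card (Mset n E \<sigma>) + card R \<le> n" "R \<noteq> {}" "R \<subseteq> I"
      using key[OF s2] by auto
    have "finite R" using R(3) by (rule finite_subset) (simp add: assms(4))
    then have "card R \<ge> 1" using R(2) by (simp add: Suc_le_eq card_gt_0_iff)
    then show "int (card (Mset n E \<sigma>)) \<le> int n - int (igamma n E) - 1"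
      using R(1) assms(6) by linarith
  qed
qed

end
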